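(* Let $A\subseteq\mathcal{T}_n\setminus\mathcal{S}_n$. The following are equivalent: (1) $A$ is independent; (2) for all distinct $a,b\in A$ there is no $g\in\mathcal{S}_n$ such that $\ker(a)g\subseteq\ker(b)$.
   Context: $\Omega=\{1,\ldots,n\}$, $\mathcal{T}_n$ is the monoid of all maps $\Omega\to\Omega$, $\mathcal{S}_n$ the symmetric group. A set $A\subseteq\mathcal{T}_n\setminus\mathcal{S}_n$ is independent if for all distinct $a,b\in A$ we have $a\notin\langle b,\mathcal{S}_n\rangle$. $\ker(a)=\{(x,y)\in\Omega\times\Omega: xa=ya\}$, and for $g\in\mathcal{S}_n$, $\ker(a)g=\{(xg,yg):(x,y)\in\ker(a)\}$; inclusion is inclusion of relations. *)

theory Defs
  imports Main
begin

text \<open>Omega is modelled by a finite type 'a (n = CARD('a)).  T_n is the set of all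
maps 'a \<Rightarrow> 'a, S_n the bijections.  Maps act on the right: x(ab) = (xa)b,
so the product ab is the function composition b \<circ> a.\<close>

definition sym_grp :: "('a \<Rightarrow> 'a) set" where
  "sym_grp = {g. bij g}"

inductive_set gen_monoid :: "('a \<Rightarrow> 'a) set \<Rightarrow> ('a \<Rightarrow> 'a) set" for X where
  gen_id: "id \<in> gen_monoid X"
| gen_step: "f \<in> gen_monoid X \<Longrightarrow> g \<in> X \<Longrightarrow> g \<circ> f \<in> gen_monoid X"

definition ker :: "('a \<Rightarrow> 'a) \<Rightarrow> ('a \<times> 'a) set" where
  "ker a = {(x, y). a x = a y}"

definition rel_act :: "('a \<times> 'a) set \<Rightarrow> ('a \<Rightarrow> 'a) \<Rightarrow> ('a \<times> 'a) set" where
  "rel_act R g = {(g x, g y) | x y. (x, y) \<in> R}"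

definition independent :: "('a \<Rightarrow> 'a) set \<Rightarrow> bool" where
  "independent A \<longleftrightarrow> A \<subseteq> UNIV - sym_grp \<and>
     (\<forall>a\<in>A. \<forall>b\<in>A. a \<noteq> b \<longrightarrow> a \<notin> gen_monoid (insert b sym_grp))"

end

theory Submission
  imports Defs
begin

lemma extend_perm:
  fixes f :: "'a::finite \<Rightarrow> 'a"
  assumes "inj_on f A"
  shows "\<exists>\<sigma>. bij \<sigma> \<and> (\<forall>x\<in>A. \<sigma> x = f x)"
proof -
  have "card (UNIV - A) = card (UNIV - f ` A)"
    using assms by (simp add: card_Diff_subset card_image)
  then obtain h where h: "bij_betw h (UNIV - A) (UNIV - f ` A)"
    using finite_same_card_bij[OF finite finite] by blast
  have b1: "bij_betw f A (f ` A)" using assms by (simp add: bij_betw_imageI)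
  have "bij_betw (\<lambda>x. if x \<in> A then f x else h x) (A \<union> (UNIV - A)) (f ` A \<union> (UNIV - f ` A))"
    by (rule bij_betw_disjoint_Un[OF b1 h]) auto
  then have "bij (\<lambda>x. if x \<in> A then f x else h x)" by simp
  then show ?thesis by auto
qed

lemma gen_comp: "f \<in> gen_monoid X \<Longrightarrow> g \<in> X \<Longrightarrow> g \<circ> f \<in> gen_monoid X"
  by (rule gen_step)

lemma key:
  fixes a :: "'a::finite \<Rightarrow> 'a"
  assumes na: "\<not> inj a"
  shows "e \<in> gen_monoid (insert a sym_grp) \<Longrightarrow> card (range e) \<le> card (range a) \<Longrightarrow>
     (\<forall>x y. e x = e y \<longrightarrow> b x = b y) \<Longrightarrow> b \<in> gen_monoid (insert a sym_grp)"
proof (induction "card (range e)" arbitrary: e rule: less_induct)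
  case less
  show ?case
  proof (cases "\<forall>x y. b x = b y \<longrightarrow> e x = e y")
    case True
    define f where "f = b \<circ> inv e"
    have fe: "f (e x) = b x" for x
    proof -
      have "e (inv e (e x)) = e x" by (simp add: f_inv_into_f)
      then have "b (inv e (e x)) = b x" using less.prems(3) by blast
      then show ?thesis by (simp add: f_def)
    qed
    have "inj_on f (range e)"
    proof (rule inj_onI)
      fix z w assume zw: "z \<in> range e" "w \<in> range e" "f z = f w"
      then obtain x y where "z = e x" "w = e y" by blast
      then have "b x = b y" using zw(3) fe by simp
      then show "z = w" using True \<open>z = e x\<close> \<open>w = e y\<close> by blast
    qed
    then obtain \<sigma> where s: "bij \<sigma>" "\<forall>x\<in>range e. \<sigma> x = f x" using extend_perm by blast
    have "b = \<sigma> \<circ> e" using s fe by auto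
    moreover have "\<sigma> \<circ> e \<in> gen_monoid (insert a sym_grp)"
      using less.prems(1) s(1) by (intro gen_step) (auto simp: sym_grp_def)
    ultimately show ?thesis by simp
  next
    case False
    then obtain x0 y0 where xy: "b x0 = b y0" "e x0 \<noteq> e y0" by blast
    define u where "u = e x0"
    define v where "v = e y0"
    have uv: "u \<noteq> v" "u \<in> range e" "v \<in> range e" using xy by (auto simp: u_def v_def)
    obtain p q where pq: "p \<noteq> q" "a p = a q" using na unfolding inj_def by blast
    define R where "R = range e - {u, v}"
    have cR: "card R = card (range e) - 2" using uv by (simp add: R_def card_Diff_subset)
    have cA: "card (range a - {a p}) = card (range a) - 1" by simp
    have "card (range a) \<ge> 1"
      by (simp add: Suc_le_eq card_gt_0_iff)
    then have "card R \<le> card (range a - {a p})" using cR cA less.prems(2) by linarith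
    then obtain \<iota> where io: "\<iota> ` R \<subseteq> range a - {a p}" "inj_on \<iota> R"
      using card_le_inj[of R "range a - {a p}"] by auto
    define g0 where "g0 z = (if z = u then p else if z = v then q else inv a (\<iota> z))" for z
    have ag0: "a (g0 z) = (if z = u \<or> z = v then a p else \<iota> z)" if "z \<in> range e" for z
    proof -
      have "z \<notin> {u,v} \<Longrightarrow> \<iota> z \<in> range a" using io(1) that by (auto simp: R_def)
      then show ?thesis using pq by (auto simp: g0_def f_inv_into_f)
    qed
    have "inj_on g0 (range e)"
    proof (rule inj_onI)
      fix x y assume xy: "x \<in> range e" "y \<in> range e" "g0 x = g0 y"
      then have aeq: "a (g0 x) = a (g0 y)" by simp
      show "x = y"
      proof (cases "x \<in> {u,v}")
        case True
        show ?thesis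
        proof (cases "y \<in> {u,v}")
          case True
          with \<open>x \<in> {u,v}\<close> xy(3) pq(1) uv(1) show ?thesis by (auto simp: g0_def)
        next
          case False
          then have "\<iota> y \<in> range a - {a p}" using io(1) xy(2) by (auto simp: R_def)
          then show ?thesis using aeq ag0[OF xy(1)] ag0[OF xy(2)] True False by auto
        qed
      next
        case False
        show ?thesis
        proof (cases "y \<in> {u,v}")
          case True
          have "\<iota> x \<in> range a - {a p}" using io(1) xy(1) False by (auto simp: R_def)
          then show ?thesis using aeq ag0[OF xy(1)] ag0[OF xy(2)] True False by auto
        next
          case False2: False
          have ii: "\<iota> x = \<iota> y" using aeq ag0[OF xy(1)] ag0[OF xy(2)] False False2 by auto
          have "x \<in> R" "y \<in> R" using xy(1,2) False False2 by (auto simp: R_def)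
          then show ?thesis by (rule inj_onD[OF io(2) ii])
        qed
      qed
    qed
    then obtain \<sigma> where s: "bij \<sigma>" "\<forall>x\<in>range e. \<sigma> x = g0 x" using extend_perm by blast
    define e' where "e' = a \<circ> (\<sigma> \<circ> e)"
    have e'M: "e' \<in> gen_monoid (insert a sym_grp)"
      unfolding e'_def using less.prems(1) s(1)
      by (intro gen_step) (auto simp: sym_grp_def)
    have ae': "e' x = (if e x = u \<or> e x = v then a p else \<iota> (e x))" for x
      using ag0[of "e x"] s(2) by (simp add: e'_def)
    have re': "range e' = (a \<circ> \<sigma>) ` range e" by (auto simp: e'_def)
    have "\<not> inj_on (a \<circ> \<sigma>) (range e)"
      using uv s(2) pq by (auto simp: inj_on_def g0_def)
    then have ne: "card ((a \<circ> \<sigma>) ` range e) \<noteq> card (range e)"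
      using inj_on_iff_eq_card[of "range e" "a \<circ> \<sigma>"] by auto
    have "card ((a \<circ> \<sigma>) ` range e) \<le> card (range e)"
      by (rule card_image_le) simp
    then have "card ((a \<circ> \<sigma>) ` range e) < card (range e)" using ne by linarith
    then have c1: "card (range e') < card (range e)"
      unfolding re' .
    have c2: "card (range e') \<le> card (range a)"
      by (rule card_mono) (auto simp: e'_def)
    have k: "\<forall>x y. e' x = e' y \<longrightarrow> b x = b y"
    proof (intro allI impI)
      fix x y assume eq: "e' x = e' y"
      have bu: "e z = u \<Longrightarrow> b z = b x0" for z using less.prems(3) u_def by metis
      have bv: "e z = v \<Longrightarrow> b z = b x0" for z using less.prems(3) v_def xy(1) by metis
      show "b x = b y"
      proof (cases "e x = u \<or> e x = v")
        case True
        show ?thesis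
        proof (cases "e y = u \<or> e y = v")
          case True
          with \<open>e x = u \<or> e x = v\<close> show ?thesis using bu bv by metis
        next
          case False
          then have "\<iota> (e y) \<in> range a - {a p}" using io(1) unfolding R_def by blast
          then show ?thesis using eq ae'[of x] ae'[of y] True False by auto
        qed
      next
        case False
        show ?thesis
        proof (cases "e y = u \<or> e y = v")
          case True
          have "\<iota> (e x) \<in> range a - {a p}" using io(1) False unfolding R_def by blast
          then show ?thesis using eq ae'[of x] ae'[of y] True False by auto
        next
          case False2: False
          have ii: "\<iota> (e x) = \<iota> (e y)" using eq ae'[of x] ae'[of y] False False2 by auto
          have "e x \<in> R" "e y \<in> R" using False False2 by (auto simp: R_def)
          then have "e x = e y" by (rule inj_onD[OF io(2) ii])
          then show ?thesis using less.prems(3) by blast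
        qed
      qed
    qed
    show ?thesis using less.hyps[OF c1 e'M c2 k] .
  qed
qed

lemma gen_form:
  "f \<in> gen_monoid (insert b sym_grp) \<Longrightarrow> bij f \<or> (\<exists>p F. bij p \<and> f = F \<circ> b \<circ> p)"
proof (induction rule: gen_monoid.induct)
  case gen_id
  have "bij (id::'a \<Rightarrow> 'a)" by (rule bij_id)
  then show ?case by blast
next
  case (gen_step f g)
  show ?case
  proof (cases "g = b")
    case True
    show ?thesis
    proof (cases "bij f")
      case True
      then have "g \<circ> f = id \<circ> b \<circ> f" using \<open>g = b\<close> by simp
      then show ?thesis using True by blast
    next
      case False
      then obtain p F where "bij p" "f = F \<circ> b \<circ> p" using gen_step.IH by blast
      then have "g \<circ> f = (g \<circ> F) \<circ> b \<circ> p" by (simp add: comp_assoc)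
      then show ?thesis using \<open>bij p\<close> by blast
    qed
  next
    case False
    then have "bij g" using gen_step.hyps(2) by (auto simp: sym_grp_def)
    show ?thesis
    proof (cases "bij f")
      case True
      then show ?thesis using \<open>bij g\<close> bij_comp by blast
    next
      case False
      then obtain p F where "bij p" "f = F \<circ> b \<circ> p" using gen_step.IH by blast
      then have "g \<circ> f = (g \<circ> F) \<circ> b \<circ> p" by (simp add: comp_assoc)
      then show ?thesis using \<open>bij p\<close> by blast
    qed
  qed
qed

theorem lemma8p3:
  fixes A :: "('a::finite \<Rightarrow> 'a) set"
  assumes "A \<subseteq> UNIV - sym_grp"
  shows "independent A \<longleftrightarrow>
    (\<forall>a\<in>A. \<forall>b\<in>A. a \<noteq> b \<longrightarrow> \<not> (\<exists>g\<in>sym_grp. rel_act (ker a) g \<subseteq> ker b))"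
proof
  assume ind: "independent A"
  show "\<forall>a\<in>A. \<forall>b\<in>A. a \<noteq> b \<longrightarrow> \<not> (\<exists>g\<in>sym_grp. rel_act (ker a) g \<subseteq> ker b)"
  proof (intro ballI impI notI)
    fix a b assume ab: "a \<in> A" "b \<in> A" "a \<noteq> b" and "\<exists>g\<in>sym_grp. rel_act (ker a) g \<subseteq> ker b"
    then obtain g where g: "bij g" "rel_act (ker a) g \<subseteq> ker b" by (auto simp: sym_grp_def)
    have "\<not> bij a" using assms ab by (auto simp: sym_grp_def)
    then have na: "\<not> inj a" using finite_UNIV_inj_surj[of a] by (auto simp: bij_def)
    define e where "e = a \<circ> inv g"
    have "inv g \<in> gen_monoid (insert a sym_grp)"
      using gen_step[OF gen_id, of "inv g"] g(1) by (simp add: sym_grp_def bij_imp_bij_inv)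
    then have eM: "e \<in> gen_monoid (insert a sym_grp)" unfolding e_def
      by (rule gen_step) simp
    have ce: "card (range e) \<le> card (range a)" by (rule card_mono) (auto simp: e_def)
    have k: "\<forall>x y. e x = e y \<longrightarrow> b x = b y"
    proof (intro allI impI)
      fix x y assume "e x = e y"
      then have "(inv g x, inv g y) \<in> ker a" by (simp add: e_def ker_def)
      then have "(g (inv g x), g (inv g y)) \<in> rel_act (ker a) g" unfolding rel_act_def by blast
      moreover have "g (inv g x) = x" "g (inv g y) = y" using g(1) by (simp_all add: bij_is_surj surj_f_inv_f)
      ultimately have "(x, y) \<in> ker b" using g(2) by (metis subsetD)
      then show "b x = b y" by (simp add: ker_def)
    qed
    have "b \<in> gen_monoid (insert a sym_grp)" using key[OF na eM ce k] .
    moreover have H: "\<forall>a\<in>A. \<forall>b\<in>A. a \<noteq> b \<longrightarrow> a \<notin> gen_monoid (insert b sym_grp)"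
      using ind unfolding independent_def by (rule conjunct2)
    ultimately show False using ab(1,2,3) by (metis (no_types) H)
  qed
next
  assume R: "\<forall>a\<in>A. \<forall>b\<in>A. a \<noteq> b \<longrightarrow> \<not> (\<exists>g\<in>sym_grp. rel_act (ker a) g \<subseteq> ker b)"
  show "independent A"
    unfolding independent_def
  proof (intro conjI assms ballI impI notI)
    fix a b assume ab: "a \<in> A" "b \<in> A" "a \<noteq> b" and am: "a \<in> gen_monoid (insert b sym_grp)"
    have "\<not> bij a" using assms ab by (auto simp: sym_grp_def)
    then obtain p F where pF: "bij p" "a = F \<circ> b \<circ> p" using gen_form[OF am] by blast
    have "rel_act (ker b) (inv p) \<subseteq> ker a"
    proof
      fix z assume "z \<in> rel_act (ker b) (inv p)"
      then obtain x y where xy: "z = (inv p x, inv p y)" "b x = b y"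
        unfolding rel_act_def ker_def by blast
      have "p (inv p x) = x" "p (inv p y) = y" using pF(1) by (simp_all add: bij_is_surj surj_f_inv_f)
      then have "a (inv p x) = a (inv p y)" using pF(2) xy(2) by simp
      then show "z \<in> ker a" using xy(1) by (simp add: ker_def)
    qed
    moreover have "inv p \<in> sym_grp" using pF(1) by (simp add: sym_grp_def bij_imp_bij_inv)
    ultimately show False using R[rule_format, OF ab(2) ab(1)] ab(3) by blast
  qed
qed

end
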